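(* Let $\mathcal{A}$ be a deterministic learning algorithm and $\bar{\mathcal{A}}_0$ a deterministic update map, and consider the unlearning mechanism with full side information $$\bar{\mathcal{A}}(U,\mathcal{A}(R\cup U),R\cup U)=\bar{\mathcal{A}}_0(U,\mathcal{A}(R\cup U),R\cup U)+\nu,\qquad \nu\sim\mathcal{N}(0,\sigma^2 I_d),$$ where $\nu$ is drawn independently at each call and $\sigma$ may depend on the information available to the mechanism, i.e. on $(U,R\cup U)$ or on $(\emptyset,R)$. If the noise scale is chosen as a function of the retained set only, $$\sigma=\sigma(R)=\frac{\mathrm{RS}_{(\mathcal{A},\bar{\mathcal{A}})}(R)}{\varepsilon}\sqrt{2\log(1.25/\delta)}$$ (so that in the call with inputs $(U,R\cup U)$ one uses $\sigma((R\cup U)\setminus U)=\sigma(R)$), then $(\mathcal{A},\bar{\mathcal{A}})$ satisfies $(\varepsilon,\delta)$-unlearning for every $\varepsilon,\delta\in(0,1)$.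
   Context: Let $\mathcal{Z}$ be a data domain and datasets be finite subsets of $\mathcal{Z}$; outputs lie in $\mathcal{W}\subseteq\mathbb{R}^d$ with the Euclidean norm $\|\cdot\|$. A learning algorithm $\mathcal{A}$ maps a dataset $S$ to $\mathcal{A}(S)\in\mathcal{W}$. An unlearning mechanism $\bar{\mathcal{A}}$ takes a forget set $U\subseteq S$, the learned output $\mathcal{A}(S)$ and side information $T(S)$ (here full information $T(S)=S$) and outputs an element of $\mathcal{W}$; the retain set is $R=S\setminus U$. Two random variables $X,Y$ with values in $\mathcal{W}$ are $(\varepsilon,\delta)$-indistinguishable if for every measurable $W\subseteq\mathcal{W}$, $P(X\in W)\le e^{\varepsilon}P(Y\in W)+\delta$ and $P(Y\in W)\le e^{\varepsilon}P(X\in W)+\delta$. The pair $(\mathcal{A},\bar{\mathcal{A}})$ satisfies $(\varepsilon,\delta)$-unlearning (for single deletions) if for every dataset $R$ of size $n$ and every forget set $U$ with $|U\cup R|\le n+1$, the random outputs $\bar{\mathcal{A}}(U,\mathcal{A}(R\cup U),T(R\cup U))$ and $\bar{\mathcal{A}}(\emptyset,\mathcal{A}(R),T(R))$ are $(\varepsilon,\delta)$-indistinguishable. The retain sensitivity for unlearning of a retained dataset $R$ is $$\mathrm{RS}_{(\mathcal{A},\bar{\mathcal{A}})}(R)=\max_{Z\subseteq\mathcal{Z},\,|Z|=1}\big\|\bar{\mathcal{A}}_0(\emptyset,\mathcal{A}(R),T(R))-\bar{\mathcal{A}}_0(Z,\mathcal{A}(R\cup Z),T(R\cup Z))\big\|.$$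 *)

theory Defs
  imports "HOL-Probability.Probability"
begin

definition std_gauss :: "'a::euclidean_space measure" where
  "std_gauss = density lborel (\<lambda>x. ennreal (\<Prod>b\<in>Basis. std_normal_density (x \<bullet> b)))"

text \<open>Law of c + nu with nu ~ N(0, s^2 I_d) (point mass at c if s = 0).\<close>
definition gauss_at :: "'a::euclidean_space \<Rightarrow> real \<Rightarrow> 'a measure" where
  "gauss_at c s = distr std_gauss borel (\<lambda>x. c + s *\<^sub>R x)"

definition indist :: "real \<Rightarrow> real \<Rightarrow> 'a::euclidean_space measure \<Rightarrow> 'a measure \<Rightarrow> bool" where
  "indist \<epsilon> \<delta> P Q \<longleftrightarrow>
     (\<forall>W \<in> sets borel. measure P W \<le> exp \<epsilon> * measure Q W + \<delta>
                       \<and> measure Q W \<le> exp \<epsilon> * measure P W + \<delta>)"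

text \<open>(eps,delta)-unlearning for single deletions, full side information T(S) = S.
  A : dataset -> output; Abar U w S : forget set, learned output, side information -> output law.\<close>
definition unlearning ::
  "real \<Rightarrow> real \<Rightarrow> ('z set \<Rightarrow> 'a::euclidean_space) \<Rightarrow> ('z set \<Rightarrow> 'a \<Rightarrow> 'z set \<Rightarrow> 'a measure) \<Rightarrow> bool" where
  "unlearning \<epsilon> \<delta> A Abar \<longleftrightarrow>
     (\<forall>R U. finite R \<and> finite U \<and> U \<inter> R = {} \<and> card (U \<union> R) \<le> card R + 1 \<longrightarrow>
        indist \<epsilon> \<delta> (Abar U (A (R \<union> U)) (R \<union> U)) (Abar {} (A R) R))"

text \<open>Retain sensitivity (the max over singletons Z = {z}, written as a supremum).\<close>
definition RS :: "('z set \<Rightarrow> 'a::euclidean_space) \<Rightarrow> ('z set \<Rightarrow> 'a \<Rightarrow> 'z set \<Rightarrow> 'a) \<Rightarrow> 'z set \<Rightarrow> real" where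
  "RS A A0 R = (SUP z. norm (A0 {} (A R) R - A0 {z} (A (R \<union> {z})) (R \<union> {z})))"

definition gauss_mech ::
  "('z set \<Rightarrow> 'a::euclidean_space \<Rightarrow> 'z set \<Rightarrow> 'a) \<Rightarrow> ('z set \<Rightarrow> real) \<Rightarrow> 'z set \<Rightarrow> 'a \<Rightarrow> 'z set \<Rightarrow> 'a measure" where
  "gauss_mech A0 sig U w S = gauss_at (A0 U w S) (sig (S - U))"

end

theory Submission
  imports Defs
begin


definition tail :: "real \<Rightarrow> ennreal" where
  "tail T = (\<integral>\<^sup>+x. ennreal (std_normal_density x) * indicator {T<..} x \<partial>lborel)"

lemma std_normal_le_half: "std_normal_density x \<le> 1/2"
proof -
  have "2 \<le> sqrt (2*pi)"
    using pi_gt3 by (simp add: real_le_rsqrt)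
  then have "1 / sqrt (2*pi) \<le> 1/2" by (simp add: divide_simps)
  moreover have "exp (- x\<^sup>2 / 2) \<le> 1" by simp
  ultimately show ?thesis unfolding std_normal_density_def
    using mult_mono[of "1 / sqrt (2*pi)" "1/2" "exp (- x\<^sup>2 / 2)" 1] by simp
qed

lemma mills:
  assumes "0 < T"
  shows "tail T \<le> ennreal (std_normal_density T / T)"
proof -
  have "tail T \<le> (\<integral>\<^sup>+x. ennreal (x * std_normal_density x / T) * indicator {T..} x \<partial>lborel)"
    unfolding tail_def
  proof (intro nn_integral_mono)
    fix x show "ennreal (std_normal_density x) * indicator {T<..} x
       \<le> ennreal (x * std_normal_density x / T) * indicator {T..} x"
    proof (cases "T < x")
      case True
      then have "std_normal_density x \<le> x * std_normal_density x / T"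
      proof -
        have "std_normal_density x * T \<le> std_normal_density x * x"
          using True by (intro mult_left_mono) auto
        then show ?thesis using assms by (simp add: divide_simps mult.commute)
      qed
      then show ?thesis using True by (simp add: indicator_def ennreal_leI)
    qed (simp add: indicator_def)
  qed
  also have "\<dots> = ennreal (0 - (- std_normal_density T / T))"
  proof (rule nn_integral_FTC_atLeast[where F="\<lambda>x. - std_normal_density x / T"])
    show "(\<lambda>x. x * std_normal_density x / T) \<in> borel_measurable borel" by measurable
    fix x assume "T \<le> x"
    show "0 \<le> x * std_normal_density x / T" using assms \<open>T \<le> x\<close> by simp
    show "((\<lambda>x. - std_normal_density x / T) has_real_derivative x * std_normal_density x / T) (at x)"
      unfolding std_normal_density_def
      using assms by (auto intro!: derivative_eq_intros simp: field_simps power2_eq_square)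
  next
    show "((\<lambda>x. - std_normal_density x / T) \<longlongrightarrow> 0) at_top"
    proof -
      have "filterlim (\<lambda>x::real. x ^ 2) at_top at_top"
        by (rule filterlim_pow_at_top[OF _ filterlim_ident]) simp
      have "filterlim (\<lambda>x::real. (1/2) * x ^ 2) at_top at_top"
        by (rule filterlim_tendsto_pos_mult_at_top[OF tendsto_const _ \<open>filterlim (\<lambda>x::real. x ^ 2) at_top at_top\<close>]) simp
      then have "filterlim (\<lambda>x::real. - ((1/2) * x ^ 2)) at_bot at_top"
        by (simp only: filterlim_uminus_at_top)
      then have "filterlim (\<lambda>x::real. - x\<^sup>2 / 2) at_bot at_top"
        by simp
      then have "((\<lambda>x::real. exp (- x\<^sup>2 / 2)) \<longlongrightarrow> 0) at_top"
        using exp_at_bot filterlim_compose by blast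
      then have "((\<lambda>x::real. - ((1 / sqrt (2*pi)) * exp (- x\<^sup>2 / 2)) / T) \<longlongrightarrow> - ((1 / sqrt (2*pi)) * 0) / T) at_top"
        using assms by (intro tendsto_intros) auto
      then show ?thesis unfolding std_normal_density_def by simp
    qed
  qed
  finally show ?thesis by simp
qed

lemma nn_std_normal_total: "(\<integral>\<^sup>+x. ennreal (std_normal_density x) \<partial>lborel) = 1"
  by (subst nn_integral_eq_integral) auto

lemma tail_mono: "S \<le> T \<Longrightarrow> tail T \<le> tail S"
  unfolding tail_def by (intro nn_integral_mono) (auto simp: indicator_def)

lemma tail_neg_part: "(\<integral>\<^sup>+x. ennreal (std_normal_density x) * indicator {..<0} x \<partial>lborel) = tail 0"
proof -
  have "(\<integral>\<^sup>+x. ennreal (std_normal_density x) * indicator {..<0} x \<partial>lborel)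
     = ennreal \<bar>-1\<bar> * (\<integral>\<^sup>+x. ennreal (std_normal_density (0 + -1 * x)) * indicator {..<0} (0 + -1 * x) \<partial>lborel)"
    by (rule nn_integral_real_affine) auto
  also have "\<dots> = tail 0"
  proof -
    have "\<And>x. ennreal (std_normal_density (0 + -1 * x)) * indicator {..<0} (0 + -1 * x)
       = ennreal (std_normal_density x) * indicator {0<..} x"
      by (auto simp: indicator_def std_normal_density_def)
    then show ?thesis by (simp add: tail_def)
  qed
  finally show ?thesis .
qed

lemma tail_zero: "tail 0 \<le> ennreal (1/2)"
proof -
  have "tail 0 + tail 0 = (\<integral>\<^sup>+x. ennreal (std_normal_density x) * indicator {0<..} x
        + ennreal (std_normal_density x) * indicator {..<0} x \<partial>lborel)"
    by (subst nn_integral_add) (auto simp: tail_def tail_neg_part)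
  also have "\<dots> \<le> (\<integral>\<^sup>+x. ennreal (std_normal_density x) \<partial>lborel)"
    by (intro nn_integral_mono) (auto simp: indicator_def)
  finally have "2 * tail 0 \<le> 1" by (simp add: nn_std_normal_total mult_2)
  then have "ennreal (1/2) * (2 * tail 0) \<le> ennreal (1/2) * 1" by (rule mult_left_mono) simp
  moreover have "ennreal (1/2) * 2 = 1"
    using ennreal_mult[of "1/2" 2] by simp
  ultimately show ?thesis
    by (simp add: mult.assoc[symmetric])
qed

lemma tail_neg: assumes "T \<le> 0" shows "tail T \<le> ennreal (1/2 * (0 - T) + 1/2)"
proof -
  have "tail T = (\<integral>\<^sup>+x. ennreal (std_normal_density x) * indicator {T<..0} x
        + ennreal (std_normal_density x) * indicator {0<..} x \<partial>lborel)"
    unfolding tail_def using assms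
    by (intro nn_integral_cong) (auto simp: indicator_def)
  also have "\<dots> = (\<integral>\<^sup>+x. ennreal (std_normal_density x) * indicator {T<..0} x \<partial>lborel) + tail 0"
    by (subst nn_integral_add) (auto simp: tail_def)
  also have "(\<integral>\<^sup>+x. ennreal (std_normal_density x) * indicator {T<..0} x \<partial>lborel)
      \<le> (\<integral>\<^sup>+x. ennreal (1/2) * indicator {T<..0} x \<partial>lborel)"
    by (intro nn_integral_mono mult_right_mono ennreal_leI std_normal_le_half) auto
  also have "\<dots> = ennreal (1/2) * ennreal (0 - T)"
    using assms by (simp add: nn_integral_cmult)
  finally have "tail T \<le> ennreal (1/2) * ennreal (0 - T) + ennreal (1/2)"
    using tail_zero by (meson add_left_mono order.trans add_right_mono)
  also have "ennreal (1/2) * ennreal (0 - T) = ennreal (1/2 * (0 - T))"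
    by (rule ennreal_mult[symmetric]) (use assms in auto)
  also have "ennreal (1/2 * (0 - T)) + ennreal (1/2) = ennreal (1/2 * (0 - T) + 1/2)"
    by (rule ennreal_plus[symmetric]) (use assms in auto)
  finally show ?thesis .
qed



lemma exp_le_inv: fixes x :: real assumes "0 \<le> x" "x < 1" shows "exp x \<le> 1 / (1 - x)"
proof -
  have "1 - x \<le> exp (-x)" using exp_ge_add_one_self[of "-x"] by simp
  then have "(1 - x) * exp x \<le> exp (-x) * exp x" by (rule mult_right_mono) simp
  then have "(1 - x) * exp x \<le> 1" by (simp add: exp_minus)
  then show ?thesis using assms by (simp add: field_simps)
qed

lemma exp_half_bound: "exp (1/2::real) \<le> 0.75 * sqrt (2*pi)"
proof (rule power2_le_imp_le)
  have "(exp (1/2::real))\<^sup>2 = exp 1"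
    by (simp add: power2_eq_square mult_exp_exp)
  also have "\<dots> < 2.72" using e_less_272 by simp
  also have "(2.72::real) \<le> 0.5625 * (2*pi)" using pi_gt3 by simp
  also have "0.5625 * (2*pi) = (0.75 * sqrt (2*pi))\<^sup>2"
    by (simp only: power_mult_distrib real_sqrt_pow2[of "2*pi"] pi_ge_zero mult_nonneg_nonneg) (simp add: power2_eq_square)
  finally show "(exp (1/2::real))\<^sup>2 \<le> (0.75 * sqrt (2*pi))\<^sup>2" by (rule less_imp_le)
  show "0 \<le> 0.75 * sqrt (2*pi)" by simp
qed

lemma tail_delta:
  assumes d0: "0 < \<delta>" and d1: "\<delta> < 1" and cdef: "c = sqrt (2 * ln (1.25 / \<delta>))"
    and Tc: "c - 1/(2*c) \<le> T"
  shows "tail T \<le> ennreal \<delta>"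
proof -
  define L where "L = ln (1.25/\<delta>)"
  have q: "1 < 1.25/\<delta>" using d0 d1 by (simp add: field_simps)
  have Lpos: "0 < L" unfolding L_def by (rule ln_gt_zero[OF q])
  have expL: "exp L = 1.25/\<delta>" unfolding L_def using q d0 by (intro exp_ln) simp
  have dL: "\<delta> = 1.25 * exp (-L)" using expL d0 by (simp add: exp_minus field_simps)
  have c2: "c^2 = 2*L" using Lpos by (simp add: cdef L_def)
  have cpos: "0 < c" using Lpos by (simp add: cdef L_def)
  show ?thesis
  proof (cases "\<delta> < 1/2")
    case True
    have "exp (0.6::real) \<le> 1 / (1 - 0.6)" by (rule exp_le_inv) auto
    also have "\<dots> < 1.25/\<delta>" using True d0 by (simp add: field_simps)
    also have "\<dots> = exp L" using expL by simp
    finally have L6: "0.6 < L" by simp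
    have c109: "1.09 \<le> c"
    proof (rule ccontr)
      assume "\<not> 1.09 \<le> c"
      then have "c < 1.09" by simp
      then have "c^2 < 1.09^2" by (rule power_strict_mono) (use cpos in auto)
      then show False using c2 L6 by (simp add: power2_eq_square)
    qed
    have "1/(2*c) \<le> 1/(2*1.09)"
      by (rule divide_left_mono) (use c109 in auto)
    then have t06: "0.6 \<le> c - 1/(2*c)" using c109 by simp
    then have T06: "0.6 \<le> T" using Tc by simp
    then have Tpos: "0 < T" by simp
    have "(c - 1/(2*c))^2 = c^2 - 1 + 1/(4*c^2)"
      using cpos by (simp add: power2_eq_square field_simps)
    also have "\<dots> \<ge> c^2 - 1" by simp
    finally have "c^2 - 1 \<le> (c - 1/(2*c))^2" .
    also have "(c - 1/(2*c))^2 \<le> T^2"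
      by (rule power_mono) (use Tc t06 in auto)
    finally have T2: "2*L - 1 \<le> T^2" using c2 by simp
    have "exp (- T\<^sup>2 / 2) \<le> exp (1/2 + (-L))"
      using T2 by simp
    also have "\<dots> = exp (1/2) * exp (-L)" by (simp only: exp_add)
    also have "\<dots> = exp (1/2) * (\<delta> / 1.25)" using dL by simp
    finally have E: "exp (- T\<^sup>2 / 2) \<le> exp (1/2) * (\<delta> / 1.25)" .
    have "std_normal_density T / T \<le> std_normal_density T / 0.6"
      by (rule divide_left_mono) (use T06 in auto)
    also have "\<dots> = exp (- T\<^sup>2 / 2) / (0.6 * sqrt (2*pi))"
      by (simp add: std_normal_density_def)
    also have "\<dots> \<le> exp (1/2) * (\<delta> / 1.25) / (0.6 * sqrt (2*pi))"
      by (rule divide_right_mono[OF E]) simp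
    also have "\<dots> = (exp (1/2) / (0.75 * sqrt (2*pi))) * \<delta>"
      by (simp add: field_simps)
    also have "\<dots> \<le> 1 * \<delta>"
      using exp_half_bound d0 by (intro mult_right_mono) (auto simp: divide_simps)
    finally have "std_normal_density T / T \<le> \<delta>" by simp
    then show ?thesis
      using mills[OF Tpos] by (meson ennreal_leI order.trans)
  next
    case False
    show ?thesis
    proof (cases "0 \<le> T")
      case True
      have "tail T \<le> tail 0" by (rule tail_mono) (use True in simp)
      also have "\<dots> \<le> ennreal (1/2)" by (rule tail_zero)
      also have "\<dots> \<le> ennreal \<delta>" using False by (intro ennreal_leI) simp
      finally show ?thesis .
    next
      case Tneg: False
      then have "c - 1/(2*c) < 0" using Tc by simp
      then have "c < 1/(2*c)" by simp
      then have "c * (2*c) < 1" using cpos by (simp add: field_simps)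
      then have "L < 1/4" using c2 by (simp add: power2_eq_square)
      then have dge: "0.9375 \<le> \<delta>"
        using dL exp_ge_add_one_self[of "-L"] by simp
      have "exp (0.2::real) \<le> 1 / (1 - 0.2)" by (rule exp_le_inv) auto
      also have "\<dots> < 1.25/\<delta>" using d1 d0 by (simp add: field_simps)
      also have "\<dots> = exp L" using expL by simp
      finally have L2: "0.2 < L" by simp
      have c63: "0.63 \<le> c"
      proof (rule ccontr)
        assume "\<not> 0.63 \<le> c"
        then have "c < 0.63" by simp
        then have "c^2 < 0.63^2" by (rule power_strict_mono) (use cpos in auto)
        then show False using c2 L2 by (simp add: power2_eq_square)
      qed
      have "2*c^2 - 1 + c/2 \<ge> 0" using c2 L2 c63 by simp
      then have "-1/4 * (2*c) \<le> c * (2*c) - 1" by (simp add: power2_eq_square algebra_simps)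
      then have "-1/4 \<le> c - 1/(2*c)" using cpos by (simp add: field_simps)
      then have Tq: "-1/4 \<le> T" using Tc by simp
      have "tail T \<le> ennreal (1/2 * (0 - T) + 1/2)" by (rule tail_neg) (use Tneg in simp)
      also have "\<dots> \<le> ennreal \<delta>" using Tq dge by (intro ennreal_leI) simp
      finally show ?thesis .
    qed
  qed
qed



definition gd :: "'a::euclidean_space \<Rightarrow> real" where
  "gd y = (\<Prod>b\<in>Basis. std_normal_density (y \<bullet> b))"

lemma gd_nonneg: "0 \<le> gd y" unfolding gd_def by (intro prod_nonneg) auto

lemma gd_measurable[measurable]: "gd \<in> borel_measurable borel"
  unfolding gd_def by measurable

lemma std_gauss_gd: "std_gauss = density lborel (\<lambda>x. ennreal (gd x))"
  unfolding std_gauss_def gd_def ..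

abbreviation NN :: "real measure" where "NN \<equiv> density lborel std_normal_density"

lemma NN_prob: "prob_space NN" by (rule prob_space_normal_density) simp

lemma sets_NN[simp]: "sets NN = sets borel" by simp

lemma psf_NN: "product_sigma_finite (\<lambda>_::'i. NN)"
  unfolding product_sigma_finite_def
  using NN_prob prob_space_imp_sigma_finite by blast

lemma psf_lborel: "product_sigma_finite (\<lambda>_::'i. lborel :: real measure)"
  unfolding product_sigma_finite_def
  using sigma_finite_lborel by blast

lemma inner_e: fixes f :: "'a::euclidean_space \<Rightarrow> real"
  assumes "b \<in> Basis" shows "(\<Sum>b'\<in>Basis. f b' *\<^sub>R b') \<bullet> b = f b"
  using assms by (simp add: inner_sum_left inner_Basis if_distrib cong: if_cong)

lemma density_PiM_eq:
  "density (\<Pi>\<^sub>M b\<in>(Basis::'a::euclidean_space set). lborel) (\<lambda>f. \<Prod>b\<in>Basis. ennreal (std_normal_density (f b)))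
   = (\<Pi>\<^sub>M b\<in>(Basis::'a set). NN)"
proof (rule product_sigma_finite.PiM_eqI[OF psf_NN])
  show "finite (Basis::'a set)" by simp
  show "sets (density (\<Pi>\<^sub>M b\<in>(Basis::'a set). lborel) (\<lambda>f. \<Prod>b\<in>Basis. ennreal (std_normal_density (f b))))
     = sets (\<Pi>\<^sub>M b\<in>(Basis::'a set). NN)"
    unfolding sets_density by (rule sets_PiM_cong) simp_all
  fix A assume A: "\<And>i. i \<in> (Basis::'a set) \<Longrightarrow> A i \<in> sets NN"
  then have A': "\<And>i. i \<in> (Basis::'a set) \<Longrightarrow> A i \<in> sets borel" by simp
  have mem: "Pi\<^sub>E Basis A \<in> sets (\<Pi>\<^sub>M b\<in>(Basis::'a set). (lborel::real measure))"
    using A' by (intro sets_PiM_I_finite) auto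
  have "emeasure (density (\<Pi>\<^sub>M b\<in>(Basis::'a set). lborel) (\<lambda>f. \<Prod>b\<in>Basis. ennreal (std_normal_density (f b)))) (Pi\<^sub>E Basis A)
     = (\<integral>\<^sup>+f. (\<Prod>b\<in>Basis. ennreal (std_normal_density (f b))) * indicator (Pi\<^sub>E Basis A) f \<partial>(\<Pi>\<^sub>M b\<in>(Basis::'a set). lborel))"
    using mem by (subst emeasure_density) auto
  also have "\<dots> = (\<integral>\<^sup>+f. (\<Prod>b\<in>Basis. ennreal (std_normal_density (f b)) * indicator (A b) (f b)) \<partial>(\<Pi>\<^sub>M b\<in>(Basis::'a set). lborel))"
  proof (intro nn_integral_cong)
    fix f assume f: "f \<in> space (\<Pi>\<^sub>M b\<in>(Basis::'a set). (lborel::real measure))"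
    then have fe: "f \<in> extensional Basis" by (simp add: space_PiM PiE_def)
    show "(\<Prod>b\<in>Basis. ennreal (std_normal_density (f b))) * indicator (Pi\<^sub>E Basis A) f
        = (\<Prod>b\<in>Basis. ennreal (std_normal_density (f b)) * indicator (A b) (f b))"
    proof (cases "f \<in> Pi\<^sub>E Basis A")
      case True
      then show ?thesis by (auto simp: prod.distrib indicator_def PiE_def Pi_def)
    next
      case False
      then obtain b where "b \<in> Basis" "f b \<notin> A b" using fe by (auto simp: PiE_def Pi_def)
      then show ?thesis using False by (auto simp: indicator_def)
    qed
  qed
  also have "\<dots> = (\<Prod>b\<in>Basis. \<integral>\<^sup>+x. ennreal (std_normal_density x) * indicator (A b) x \<partial>lborel)"
    using A' by (subst product_sigma_finite.product_nn_integral_prod[OF psf_lborel]) auto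
  also have "\<dots> = (\<Prod>b\<in>Basis. emeasure NN (A b))"
    using A' by (intro prod.cong refl) (simp add: emeasure_density)
  finally show "emeasure (density (\<Pi>\<^sub>M b\<in>(Basis::'a set). lborel) (\<lambda>f. \<Prod>b\<in>Basis. ennreal (std_normal_density (f b)))) (Pi\<^sub>E Basis A)
      = (\<Prod>b\<in>Basis. emeasure NN (A b))" .
qed

lemma std_gauss_distr:
  "std_gauss = distr (\<Pi>\<^sub>M b\<in>(Basis::'a::euclidean_space set). NN) borel (\<lambda>f. \<Sum>b\<in>Basis. f b *\<^sub>R b)"
proof -
  have "std_gauss = density (distr (\<Pi>\<^sub>M b\<in>(Basis::'a set). lborel) borel (\<lambda>f. \<Sum>b\<in>Basis. f b *\<^sub>R b)) (\<lambda>x. ennreal (gd x))"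
    unfolding std_gauss_gd by (simp flip: lborel_eq)
  also have "\<dots> = distr (density (\<Pi>\<^sub>M b\<in>(Basis::'a set). lborel) (\<lambda>f. ennreal (gd (\<Sum>b\<in>Basis. f b *\<^sub>R b)))) borel (\<lambda>f. \<Sum>b\<in>Basis. f b *\<^sub>R b)"
    by (rule density_distr) measurable
  also have "density (\<Pi>\<^sub>M b\<in>(Basis::'a set). lborel) (\<lambda>f. ennreal (gd (\<Sum>b\<in>Basis. f b *\<^sub>R b)))
     = density (\<Pi>\<^sub>M b\<in>(Basis::'a set). lborel) (\<lambda>f. \<Prod>b\<in>Basis. ennreal (std_normal_density (f b)))"
    by (intro density_cong) (auto simp: gd_def inner_e prod_ennreal)
  also have "\<dots> = (\<Pi>\<^sub>M b\<in>(Basis::'a set). NN)" by (rule density_PiM_eq)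
  finally show ?thesis .
qed



lemma PN_prob: "prob_space (\<Pi>\<^sub>M b\<in>(Basis::'a::euclidean_space set). NN)"
  by (rule prob_space_PiM) (simp add: NN_prob)

lemma distr_comp_NN:
  assumes "b \<in> (Basis::'a::euclidean_space set)" and "sets N = sets borel"
  shows "distr (\<Pi>\<^sub>M b\<in>(Basis::'a set). NN) N (\<lambda>f. f b) = NN"
proof -
  have "distr (\<Pi>\<^sub>M b\<in>(Basis::'a set). NN) N (\<lambda>f. f b) = distr (\<Pi>\<^sub>M b\<in>(Basis::'a set). NN) NN (\<lambda>f. f b)"
    by (rule distr_cong) (use assms in auto)
  also have "\<dots> = NN"
    by (rule distr_PiM_component) (use assms NN_prob in auto)
  finally show ?thesis .
qed

lemma proj_tail:
  fixes w :: "'a::euclidean_space" assumes w0: "w \<noteq> 0"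
  shows "emeasure std_gauss {y. t < y \<bullet> w} = tail (t / norm w)"
proof -
  define P where "P = (\<Pi>\<^sub>M b\<in>(Basis::'a set). NN)"
  interpret P: prob_space P unfolding P_def by (rule PN_prob)
  define S where "S f = (\<Sum>b\<in>Basis. (w \<bullet> b) * f b)" for f :: "'a \<Rightarrow> real"
  have ie: "(\<Sum>b\<in>Basis. x b *\<^sub>R b) \<bullet> w = S x" for x
    unfolding S_def inner_sum_left by (simp add: inner_commute mult.commute)
  have "emeasure std_gauss {y. t < y \<bullet> w}
      = emeasure P ((\<lambda>f. \<Sum>b\<in>Basis. f b *\<^sub>R b) -` {y. t < y \<bullet> w} \<inter> space P)"
    unfolding std_gauss_distr P_def by (rule emeasure_distr) measurable
  also have "(\<lambda>f. \<Sum>b\<in>Basis. f b *\<^sub>R b) -` {y. t < y \<bullet> w} \<inter> space P = S -` {t<..} \<inter> space P"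
    using ie by auto
  finally have E1: "emeasure std_gauss {y. t < y \<bullet> w} = emeasure P (S -` {t<..} \<inter> space P)" .

  have sP: "sets P = sets (\<Pi>\<^sub>M b\<in>(Basis::'a set). (borel::real measure))"
    unfolding P_def by (rule sets_PiM_cong) simp_all
  have mc: "(\<lambda>f. f i) \<in> measurable P N" if "i \<in> Basis" "sets N = sets borel" for i and N :: "real measure"
  proof -
    have "measurable P N = measurable P NN" by (rule measurable_cong_sets) (use that in auto)
    then show ?thesis unfolding P_def using measurable_component_singleton[OF that(1), of "\<lambda>_. NN"] by simp
  qed
  have dist: "distributed P lborel (\<lambda>f. f b) std_normal_density" if b: "b \<in> Basis" for b
    unfolding distributed_def
  proof (intro conjI)
    show "distr P lborel (\<lambda>f. f b) = NN" unfolding P_def by (rule distr_comp_NN[OF b]) simp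
    show "(\<lambda>x. ennreal (std_normal_density x)) \<in> borel_measurable lborel" by simp
    show "(\<lambda>f. f b) \<in> measurable P lborel"
      using b by (intro mc) auto
  qed
  have ind: "P.indep_vars (\<lambda>_. borel) (\<lambda>b f. f b) Basis"
  proof (subst P.indep_vars_iff_distr_eq_PiM')
    show "(Basis::'a set) \<noteq> {}" by simp
    show "(\<lambda>f::'a \<Rightarrow> real. f i) \<in> measurable P borel" if "i \<in> Basis" for i :: 'a
      using that by (intro mc) auto
    have "distr P (\<Pi>\<^sub>M i\<in>(Basis::'a set). borel) (\<lambda>x. \<lambda>i\<in>Basis. x i) = distr P P (\<lambda>x. x)"
    proof (rule distr_cong)
      show "sets (\<Pi>\<^sub>M i\<in>(Basis::'a set). (borel::real measure)) = sets P" using sP by simp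
      fix x assume "x \<in> space P"
      then have "x \<in> extensional Basis" unfolding P_def by (simp add: space_PiM PiE_def)
      then show "(\<lambda>i\<in>Basis. x i) = x" by (simp add: restrict_def extensional_def fun_eq_iff)
    qed simp
    also have "\<dots> = P" by simp
    also have "P = (\<Pi>\<^sub>M i\<in>(Basis::'a set). distr P borel (\<lambda>f. f i))"
      unfolding P_def by (rule PiM_cong) (simp_all add: distr_comp_NN)
    finally show "distr P (\<Pi>\<^sub>M i\<in>(Basis::'a set). borel) (\<lambda>x. \<lambda>i\<in>Basis. x i) =
        (\<Pi>\<^sub>M i\<in>(Basis::'a set). distr P borel (\<lambda>f. f i))" .
  qed
  define I where "I = {b\<in>(Basis::'a set). w \<bullet> b \<noteq> 0}"
  have I_ne: "I \<noteq> {}"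
  proof
    assume "I = {}"
    then have "\<forall>b\<in>Basis. w \<bullet> b = 0" by (auto simp: I_def)
    then have "w = 0" by (simp add: euclidean_all_zero_iff)
    with w0 show False by simp
  qed
  have finI: "finite I" by (simp add: I_def)
  have indY: "P.indep_vars (\<lambda>_. borel) (\<lambda>b f. (w \<bullet> b) * f b) I"
  proof -
    have "P.indep_vars (\<lambda>_. borel) (\<lambda>b f. (\<lambda>x. (w \<bullet> b) * x) (f b)) Basis"
      by (rule P.indep_vars_compose2[OF ind]) simp
    then show ?thesis by (rule P.indep_vars_subset) (auto simp: I_def)
  qed
  have distY: "distributed P lborel (\<lambda>f. (w \<bullet> b) * f b) (normal_density 0 \<bar>w \<bullet> b\<bar>)" if "b \<in> I" for b
  proof -
    have "distributed P lborel (\<lambda>f. 0 + (w \<bullet> b) * f b) (normal_density (0 + (w \<bullet> b) * 0) (\<bar>w \<bullet> b\<bar> * 1))"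
      by (rule P.normal_density_affine[OF dist]) (use that in \<open>auto simp: I_def\<close>)
    then show ?thesis by simp
  qed
  have sumY: "distributed P lborel (\<lambda>x. \<Sum>b\<in>I. (w \<bullet> b) * x b)
      (normal_density (\<Sum>b\<in>I. 0) (sqrt (\<Sum>b\<in>I. \<bar>w \<bullet> b\<bar>\<^sup>2)))"
    by (rule P.sum_indep_normal[OF finI I_ne indY _ distY]) (auto simp: I_def)
  have sumI: "(\<Sum>b\<in>I. (w \<bullet> b) * x b) = S x" for x
    unfolding S_def I_def by (rule sum.mono_neutral_left) auto
  have "(\<Sum>b\<in>I. \<bar>w \<bullet> b\<bar>\<^sup>2) = (\<Sum>b\<in>Basis. (w \<bullet> b) * (w \<bullet> b))"
    unfolding I_def by (rule sum.mono_neutral_cong_left) (auto simp: power2_eq_square)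
  also have "\<dots> = w \<bullet> w" by (rule euclidean_inner[symmetric])
  finally have "sqrt (\<Sum>b\<in>I. \<bar>w \<bullet> b\<bar>\<^sup>2) = norm w" by (simp add: norm_eq_sqrt_inner)
  then have distS: "distributed P lborel S (normal_density 0 (norm w))"
    using sumY by (simp add: sumI)
  have nw: "0 < norm w" using w0 by simp
  have "distributed P lborel (\<lambda>x. 0 + (1 / norm w) * S x) (normal_density (0 + (1 / norm w) * 0) (\<bar>1 / norm w\<bar> * norm w))"
    by (rule P.normal_density_affine[OF distS]) (use nw in auto)
  then have distZ: "distributed P lborel (\<lambda>x. (1 / norm w) * S x) std_normal_density"
    using nw by simp
  have "emeasure P ((\<lambda>x. (1 / norm w) * S x) -` {t / norm w<..} \<inter> space P)
      = (\<integral>\<^sup>+x. ennreal (std_normal_density x) * indicator {t / norm w<..} x \<partial>lborel)"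
    by (rule distributed_emeasure[OF distZ]) simp
  also have "(\<lambda>x. (1 / norm w) * S x) -` {t / norm w<..} \<inter> space P = S -` {t<..} \<inter> space P"
    using nw by (auto simp: divide_simps mult.commute)
  finally show ?thesis using E1 by (simp add: tail_def)
qed



lemma phi_shift: "std_normal_density a = std_normal_density (a + b) * exp (a * b + b\<^sup>2 / 2)"
proof -
  have "- a\<^sup>2 / 2 = - (a + b)\<^sup>2 / 2 + (a * b + b\<^sup>2 / 2)"
    by (simp add: power2_eq_square field_simps)
  then have "exp (- a\<^sup>2 / 2) = exp (- (a + b)\<^sup>2 / 2) * exp (a * b + b\<^sup>2 / 2)"
    by (simp add: exp_add[symmetric])
  then show ?thesis unfolding std_normal_density_def by simp
qed

lemma gd_shift:
  fixes z w :: "'a::euclidean_space"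
  shows "gd z = gd (z + w) * exp (z \<bullet> w + (norm w)\<^sup>2 / 2)"
proof -
  have "gd z = (\<Prod>b\<in>Basis. std_normal_density ((z + w) \<bullet> b) * exp ((z \<bullet> b) * (w \<bullet> b) + (w \<bullet> b)\<^sup>2 / 2))"
    unfolding gd_def by (intro prod.cong refl) (simp add: phi_shift[of "z \<bullet> b" "w \<bullet> b" for b] inner_add_left)
  also have "\<dots> = gd (z + w) * (\<Prod>b\<in>Basis. exp ((z \<bullet> b) * (w \<bullet> b) + (w \<bullet> b)\<^sup>2 / 2))"
    unfolding gd_def by (rule prod.distrib)
  also have "(\<Prod>b\<in>Basis. exp ((z \<bullet> b) * (w \<bullet> b) + (w \<bullet> b)\<^sup>2 / 2))
      = exp (\<Sum>b\<in>Basis. (z \<bullet> b) * (w \<bullet> b) + (w \<bullet> b)\<^sup>2 / 2)"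
    by (simp add: exp_sum)
  also have "(\<Sum>b\<in>Basis. (z \<bullet> b) * (w \<bullet> b) + (w \<bullet> b)\<^sup>2 / 2) = z \<bullet> w + (w \<bullet> w) / 2"
    by (simp add: sum.distrib euclidean_inner[of z w] euclidean_inner[of w w] power2_eq_square sum_divide_distrib)
  finally show ?thesis by (simp add: power2_norm_eq_inner)
qed

lemma nn_shift:
  fixes w :: "'a::euclidean_space"
  assumes [measurable]: "f \<in> borel_measurable borel"
  shows "(\<integral>\<^sup>+y. f y \<partial>lborel) = (\<integral>\<^sup>+z. f (w + z) \<partial>lborel)"
proof -
  have "(\<integral>\<^sup>+y. f y \<partial>lborel) = (\<integral>\<^sup>+y. f y \<partial>(distr lborel borel ((+) w)))"
    by (simp add: lborel_distr_plus)
  also have "\<dots> = (\<integral>\<^sup>+z. f (w + z) \<partial>lborel)"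
    by (rule nn_integral_distr) simp_all
  finally show ?thesis .
qed

lemma std_gauss_prob: "prob_space (std_gauss :: 'a::euclidean_space measure)"
proof
  have "emeasure (std_gauss :: 'a measure) (space std_gauss)
      = (\<integral>\<^sup>+x. (\<Prod>b\<in>(Basis::'a set). ennreal (std_normal_density (x \<bullet> b))) \<partial>lborel)"
    unfolding std_gauss_def by (simp add: emeasure_density prod_ennreal)
  also have "\<dots> = (\<Prod>b\<in>(Basis::'a set). \<integral>\<^sup>+x. ennreal (std_normal_density x) \<partial>lborel)"
    by (rule nn_integral_lborel_prod) auto
  also have "\<dots> = 1" by (simp add: nn_std_normal_total)
  finally show "emeasure (std_gauss :: 'a measure) (space std_gauss) = 1" .
qed

lemma gauss_at_prob: "prob_space (gauss_at (c::'a::euclidean_space) s)"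
proof -
  have eq: "measurable (std_gauss :: 'a measure) borel = measurable borel borel"
    by (rule measurable_cong_sets) (simp_all add: std_gauss_def)
  have h: "(\<lambda>x::'a. c + s *\<^sub>R x) \<in> borel_measurable borel" by measurable
  have "(\<lambda>x. c + s *\<^sub>R x) \<in> measurable (std_gauss :: 'a measure) borel"
    unfolding eq by (rule h)
  then show ?thesis unfolding gauss_at_def
    by (rule prob_space.prob_space_distr[OF std_gauss_prob])
qed

lemma emeasure_gauss_at:
  fixes c :: "'a::euclidean_space"
  assumes [measurable]: "W \<in> sets borel"
  shows "emeasure (gauss_at c s) W = (\<integral>\<^sup>+y. ennreal (gd y) * indicator {y. c + s *\<^sub>R y \<in> W} y \<partial>lborel)"
proof -
  have "emeasure (gauss_at c s) W = emeasure std_gauss ((\<lambda>x. c + s *\<^sub>R x) -` W \<inter> space std_gauss)"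
    unfolding gauss_at_def by (rule emeasure_distr) (simp_all add: std_gauss_def)
  also have "(\<lambda>x. c + s *\<^sub>R x) -` W \<inter> space std_gauss = {y. c + s *\<^sub>R y \<in> W}"
    by (auto simp: std_gauss_def)
  also have "emeasure std_gauss {y. c + s *\<^sub>R y \<in> W} = (\<integral>\<^sup>+y. ennreal (gd y) * indicator {y. c + s *\<^sub>R y \<in> W} y \<partial>lborel)"
    unfolding std_gauss_gd by (rule emeasure_density) measurable
  finally show ?thesis .
qed

lemma gauss_one:
  fixes c1 c2 :: "'a::euclidean_space"
  assumes s0: "0 < s" and e0: "0 < \<epsilon>" and e1: "\<epsilon> < 1" and d0: "0 < \<delta>" and d1: "\<delta> < 1"
    and nc: "norm (c1 - c2) * sqrt (2 * ln (1.25 / \<delta>)) \<le> s * \<epsilon>"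
    and cne: "c1 \<noteq> c2"
    and W[measurable]: "W \<in> sets borel"
  shows "emeasure (gauss_at c1 s) W \<le> ennreal (exp \<epsilon>) * emeasure (gauss_at c2 s) W + ennreal \<delta>"
proof -
  define c where "c = sqrt (2 * ln (1.25 / \<delta>))"
  define w where "w = (1/s) *\<^sub>R (c1 - c2)"
  define S where "S = {y. c1 + s *\<^sub>R y \<in> W}"
  define B where "B = {z. \<epsilon> - (norm w)\<^sup>2 / 2 < z \<bullet> w}"
  have S_m[measurable]: "S \<in> sets borel" unfolding S_def by measurable
  have B_m[measurable]: "B \<in> sets borel" unfolding B_def by measurable
  have w0: "w \<noteq> 0" using cne s0 by (simp add: w_def)
  have nw: "norm w = norm (c1 - c2) / s" using s0 by (simp add: w_def)
  have q: "1 < 1.25/\<delta>" using d0 d1 by (simp add: field_simps)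
  have cpos: "0 < c" unfolding c_def using q by (simp add: ln_gt_zero)
  have sc: "norm w * c \<le> \<epsilon>" using nc s0 by (simp add: nw c_def field_simps)
  have P: "emeasure (gauss_at c1 s) W = (\<integral>\<^sup>+z. ennreal (gd z) * indicator S z \<partial>lborel)"
    unfolding S_def by (rule emeasure_gauss_at[OF W])
  have "emeasure (gauss_at c2 s) W = (\<integral>\<^sup>+y. ennreal (gd y) * indicator {y. c2 + s *\<^sub>R y \<in> W} y \<partial>lborel)"
    by (rule emeasure_gauss_at[OF W])
  also have "\<dots> = (\<integral>\<^sup>+z. ennreal (gd (w + z)) * indicator {y. c2 + s *\<^sub>R y \<in> W} (w + z) \<partial>lborel)"
    by (rule nn_shift) measurable
  also have "\<dots> = (\<integral>\<^sup>+z. ennreal (gd (z + w)) * indicator S z \<partial>lborel)"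
  proof (intro nn_integral_cong)
    fix z
    have "c2 + s *\<^sub>R (w + z) = c1 + s *\<^sub>R z" using s0 by (simp add: w_def scaleR_add_right)
    then show "ennreal (gd (w + z)) * indicator {y. c2 + s *\<^sub>R y \<in> W} (w + z) = ennreal (gd (z + w)) * indicator S z"
      by (simp add: S_def add.commute indicator_def)
  qed
  finally have Q: "emeasure (gauss_at c2 s) W = (\<integral>\<^sup>+z. ennreal (gd (z + w)) * indicator S z \<partial>lborel)" .
  have pw: "ennreal (gd z) * indicator S z \<le> ennreal (exp \<epsilon>) * (ennreal (gd (z + w)) * indicator S z) + ennreal (gd z) * indicator B z" for z
  proof (cases "z \<in> B")
    case True then show ?thesis by (auto simp: indicator_def)
  next
    case False
    then have le: "z \<bullet> w + (norm w)\<^sup>2 / 2 \<le> \<epsilon>" by (simp add: B_def)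
    have "gd z = gd (z + w) * exp (z \<bullet> w + (norm w)\<^sup>2 / 2)" by (rule gd_shift)
    also have "\<dots> \<le> gd (z + w) * exp \<epsilon>" using le gd_nonneg by (intro mult_left_mono) auto
    finally have "ennreal (gd z) \<le> ennreal (exp \<epsilon>) * ennreal (gd (z + w))"
      by (simp add: ennreal_mult'[symmetric] mult.commute gd_nonneg)
    then show ?thesis using False by (auto simp: indicator_def)
  qed
  have "emeasure (gauss_at c1 s) W \<le> (\<integral>\<^sup>+z. ennreal (exp \<epsilon>) * (ennreal (gd (z + w)) * indicator S z) + ennreal (gd z) * indicator B z \<partial>lborel)"
    unfolding P by (intro nn_integral_mono pw)
  also have "\<dots> = ennreal (exp \<epsilon>) * (\<integral>\<^sup>+z. ennreal (gd (z + w)) * indicator S z \<partial>lborel) + (\<integral>\<^sup>+z. ennreal (gd z) * indicator B z \<partial>lborel)"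
    by (simp add: nn_integral_add nn_integral_cmult)
  also have "(\<integral>\<^sup>+z. ennreal (gd z) * indicator B z \<partial>lborel) = emeasure std_gauss B"
    unfolding std_gauss_gd by (rule emeasure_density[symmetric]) measurable
  also have "emeasure std_gauss B = tail ((\<epsilon> - (norm w)\<^sup>2 / 2) / norm w)"
    unfolding B_def by (rule proj_tail[OF w0])
  also have "\<dots> \<le> ennreal \<delta>"
  proof (rule tail_delta[OF d0 d1 c_def])
    have nwp: "0 < norm w" using w0 by simp
    have "c \<le> \<epsilon> / norm w" using sc nwp by (simp add: field_simps)
    moreover have "norm w / 2 \<le> 1 / (2 * c)"
    proof -
      have "norm w \<le> \<epsilon> / c" using sc cpos by (simp add: field_simps)
      also have "\<dots> \<le> 1 / c" using e1 cpos by (simp add: divide_right_mono)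
      finally show ?thesis by simp
    qed
    moreover have "(\<epsilon> - (norm w)\<^sup>2 / 2) / norm w = \<epsilon> / norm w - norm w / 2"
      using nwp by (simp add: field_simps power2_eq_square)
    ultimately show "c - 1 / (2 * c) \<le> (\<epsilon> - (norm w)\<^sup>2 / 2) / norm w" by simp
  qed
  finally show ?thesis unfolding Q by (simp add: add_mono)
qed

lemma gauss_one_real:
  fixes c1 c2 :: "'a::euclidean_space"
  assumes "0 < s" "0 < \<epsilon>" "\<epsilon> < 1" "0 < \<delta>" "\<delta> < 1"
    and "norm (c1 - c2) * sqrt (2 * ln (1.25 / \<delta>)) \<le> s * \<epsilon>"
    and "c1 \<noteq> c2" and "W \<in> sets borel"
  shows "measure (gauss_at c1 s) W \<le> exp \<epsilon> * measure (gauss_at c2 s) W + \<delta>"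
proof -
  interpret P1: prob_space "gauss_at c1 s" by (rule gauss_at_prob)
  interpret P2: prob_space "gauss_at c2 s" by (rule gauss_at_prob)
  have "ennreal (measure (gauss_at c1 s) W) \<le> ennreal (exp \<epsilon>) * ennreal (measure (gauss_at c2 s) W) + ennreal \<delta>"
    using gauss_one[OF assms] by (simp add: P1.emeasure_eq_measure P2.emeasure_eq_measure)
  also have "\<dots> = ennreal (exp \<epsilon> * measure (gauss_at c2 s) W + \<delta>)"
    using assms by (simp add: ennreal_mult'[symmetric] ennreal_plus[symmetric] del: ennreal_plus)
  finally show ?thesis
    using assms by (subst (asm) ennreal_le_iff) (auto intro!: add_nonneg_nonneg mult_nonneg_nonneg less_imp_le)
qed



lemma indist_same:
  assumes "0 < \<epsilon>" "0 < \<delta>"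
  shows "indist \<epsilon> \<delta> P P"
  unfolding indist_def
proof (intro ballI conjI)
  fix W
  have "measure P W \<le> exp \<epsilon> * measure P W"
    using assms by (intro mult_right_mono[of 1 "exp \<epsilon>", simplified]) auto
  then show "measure P W \<le> exp \<epsilon> * measure P W + \<delta>" using assms by simp
  then show "measure P W \<le> exp \<epsilon> * measure P W + \<delta>" .
qed

theorem mainTheorem1:
  fixes A :: "'z set \<Rightarrow> 'a::euclidean_space"
    and A0 :: "'z set \<Rightarrow> 'a \<Rightarrow> 'z set \<Rightarrow> 'a"
    and \<epsilon> \<delta> :: real
  assumes "0 < \<epsilon>" "\<epsilon> < 1" "0 < \<delta>" "\<delta> < 1"
    and "\<And>R. finite R \<Longrightarrow>
           bdd_above (range (\<lambda>z. norm (A0 {} (A R) R - A0 {z} (A (R \<union> {z})) (R \<union> {z}))))"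
  shows "unlearning \<epsilon> \<delta> A
           (gauss_mech A0 (\<lambda>R. RS A A0 R / \<epsilon> * sqrt (2 * ln (1.25 / \<delta>))))"
  unfolding unlearning_def
proof (intro allI impI)
  fix R U :: "'z set"
  assume H: "finite R \<and> finite U \<and> U \<inter> R = {} \<and> card (U \<union> R) \<le> card R + 1"
  define sig where "sig = (\<lambda>R. RS A A0 R / \<epsilon> * sqrt (2 * ln (1.25 / \<delta>)))"
  define c where "c = sqrt (2 * ln (1.25 / \<delta>))"
  have q: "1 < 1.25/\<delta>" using assms by (simp add: field_simps)
  have cpos: "0 < c" unfolding c_def using q by (simp add: ln_gt_zero)
  have RU: "(R \<union> U) - U = R" using H by auto
  show "indist \<epsilon> \<delta> (gauss_mech A0 sig U (A (R \<union> U)) (R \<union> U)) (gauss_mech A0 sig {} (A R) R)"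
  proof (cases "U = {}")
    case True
    then show ?thesis using assms by (simp add: indist_same)
  next
    case False
    have "card (U \<union> R) = card U + card R" using H by (simp add: card_Un_disjoint)
    then have "card U \<le> 1" using H by simp
    moreover have "card U \<noteq> 0" using H False by simp
    ultimately have "card U = 1" by simp
    then obtain z where Uz: "U = {z}" by (rule card_1_singletonE)
    define c1 where "c1 = A0 {z} (A (R \<union> {z})) (R \<union> {z})"
    define c2 where "c2 = A0 {} (A R) R"
    have M1: "gauss_mech A0 sig U (A (R \<union> U)) (R \<union> U) = gauss_at c1 (sig R)"
      unfolding gauss_mech_def c1_def using RU Uz by simp
    have M2: "gauss_mech A0 sig {} (A R) R = gauss_at c2 (sig R)"
      unfolding gauss_mech_def c2_def by simp
    have nle: "norm (c2 - c1) \<le> RS A A0 R"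
      unfolding RS_def c1_def c2_def by (rule cSUP_upper) (use H assms(5) in auto)
    show ?thesis
    proof (cases "c1 = c2")
      case True
      then show ?thesis unfolding M1 M2 using assms by (simp add: indist_same)
    next
      case cne: False
      have n0: "0 < norm (c2 - c1)" using cne by simp
      have RSpos: "0 < RS A A0 R" using nle n0 by linarith
      have spos: "0 < sig R" unfolding sig_def using RSpos cpos assms by (simp add: c_def)
      have key: "norm (c1 - c2) * sqrt (2 * ln (1.25 / \<delta>)) \<le> sig R * \<epsilon>"
      proof -
        have "norm (c1 - c2) * c \<le> RS A A0 R * c"
          using nle cpos by (simp add: norm_minus_commute)
        also have "\<dots> = sig R * \<epsilon>" using assms by (simp add: sig_def c_def)
        finally show ?thesis by (simp add: c_def)
      qed
      have key': "norm (c2 - c1) * sqrt (2 * ln (1.25 / \<delta>)) \<le> sig R * \<epsilon>"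
        using key by (simp add: norm_minus_commute)
      show ?thesis unfolding M1 M2 indist_def
      proof (intro ballI conjI)
        fix W :: "'a set" assume W: "W \<in> sets borel"
        show "measure (gauss_at c1 (sig R)) W \<le> exp \<epsilon> * measure (gauss_at c2 (sig R)) W + \<delta>"
          by (rule gauss_one_real[OF spos assms(1-4) key cne W])
        show "measure (gauss_at c2 (sig R)) W \<le> exp \<epsilon> * measure (gauss_at c1 (sig R)) W + \<delta>"
          using cne by (intro gauss_one_real[OF spos assms(1-4) key' _ W]) auto
      qed
    qed
  qed
qed


end
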